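(* For every integer $r\geq 0$, $$t(\underbrace{2,2,\ldots,2}_{r},3)=\sum_{k=1}^{r+1}(-1)^{k+1}\,d_{r,0}^k\,\frac{1}{2^{2k}}\,\zeta(2k+1)\,t(\underbrace{2,2,\ldots,2}_{r+1-k}),$$ where $d_{r,0}^k=\binom{2k}{2r+1}+\left(1-\frac{1}{2^{2k}}\right)2k$.
   Context: For positive integers $k_1,\ldots,k_m$ with $k_m>1$, the multiple $t$-value is $t(k_1,\ldots,k_m)=\sum_{1\leq n_1<n_2<\cdots<n_m}\frac{1}{(2n_1-1)^{k_1}\cdots(2n_m-1)^{k_m}}$; the empty $t$-value ($m=0$) is $1$. $\zeta$ is the Riemann zeta function. Binomial coefficients $\binom{a}{b}$ with $b>a$ are $0$. *)

theory Defs
  imports "HOL-Analysis.Analysis"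
begin

definition mtv :: "nat list \<Rightarrow> real" where
  "mtv ks = infsum (\<lambda>ns. \<Prod>i<length ks. 1 / (2 * real (ns ! i) - 1) ^ (ks ! i))
     {ns. length ns = length ks \<and> sorted_wrt (<) ns \<and> (\<forall>n\<in>set ns. 1 \<le> n)}"

definition zeta_nat :: "nat \<Rightarrow> real" where
  "zeta_nat s = (\<Sum>n. 1 / real (Suc n) ^ s)"

definition d_coeff :: "nat \<Rightarrow> nat \<Rightarrow> real" where
  "d_coeff r k = real ((2*k) choose (2*r+1)) + (1 - 1 / 2^(2*k)) * (2 * real k)"

end

theory Submission
  imports Defs "HOL-Real_Asymp.Real_Asymp"
begin

definition Dp :: "nat \<Rightarrow> real \<Rightarrow> real" where
  "Dp n y = (\<Prod>j=1..n. y^2 - (2*real j - 1)^2)"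

definition sp :: "nat \<Rightarrow> real \<Rightarrow> real" where
  "sp n y = (\<Sum>j=1..n. 1/(y - (2*real j - 1)) + 1/(y + (2*real j - 1)))"

lemma Dp_0[simp]: "Dp 0 y = 1" by (simp add: Dp_def)
lemma Dp_Suc: "Dp (Suc n) y = Dp n y * (y^2 - (2*real (Suc n) - 1)^2)"
  by (simp add: Dp_def prod.nat_ivl_Suc')
lemma sp_0[simp]: "sp 0 y = 0" by (simp add: sp_def)
lemma sp_Suc: "sp (Suc n) y = sp n y + (1/(y - (2*real (Suc n) - 1)) + 1/(y + (2*real (Suc n) - 1)))"
  by (simp add: sp_def sum.nat_ivl_Suc')

lemma Dp_shift: "Dp n (y+2) * (y + 1 - 2*real n) = Dp n y * (y + 1 + 2*real n)"
proof (induction n)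
  case 0 then show ?case by simp
next
  case (Suc n)
  have "Dp (Suc n) (y+2) * (y + 1 - 2*real (Suc n))
      = (Dp n (y+2) * (y + 1 - 2*real n)) * ((y+3+2*real n) * (y - 1 - 2*real n))"
    by (simp add: Dp_Suc algebra_simps power2_eq_square)
  also have "\<dots> = Dp n y * (y + 1 + 2*real n) * ((y+3+2*real n) * (y - 1 - 2*real n))"
    using Suc by simp
  also have "\<dots> = Dp (Suc n) y * (y + 1 + 2*real (Suc n))"
    by (simp add: Dp_Suc algebra_simps power2_eq_square)
  finally show ?case .
qed

lemma sp_shift: "sp n (y+2) = sp n y - 1/(y + 1 - 2*real n) + 1/(y + 1 + 2*real n)"
proof (induction n)
  case 0 then show ?case by simp
next
  case (Suc n)
  have e1: "y + 2 - (2 * real (Suc n) - 1) = y + 1 - 2*real n" by simp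
  have e2: "y + 2 + (2 * real (Suc n) - 1) = y + 3 + 2*real n" by simp
  have e3: "y - (2 * real (Suc n) - 1) = y + 1 - 2*real (Suc n)" by simp
  have e4: "y + (2 * real (Suc n) - 1) = y + 1 + 2*real n" by simp
  have e5: "y + 1 + 2*real (Suc n) = y + 3 + 2*real n" by simp
  show ?case unfolding sp_Suc e1 e2 e3 e4 e5 Suc by simp
qed

lemma sp_at0[simp]: "sp n 0 = 0"
  unfolding sp_def
proof (rule sum.neutral, rule ballI)
  fix j assume "j \<in> {1..n}"
  have "(0::real) - (2*real j - 1) = -(2*real j - 1)" by simp
  then show "1 / (0 - (2 * real j - 1)) + 1 / (0 + (2 * real j - 1)) = 0"
    by (simp only: minus_divide_right[symmetric]) simp
qed

lemma odd_ne0: "2 * real_of_int k + 1 \<noteq> 0"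
proof
  assume "2 * real_of_int k + 1 = 0"
  then have "real_of_int (2*k+1) = 0" by simp
  then have "2*k+1 = 0" by linarith
  then show False by presburger
qed

lemma odd_abs_ge1: "\<bar>2 * real_of_int k + 1\<bar> \<ge> 1"
proof -
  have "\<bar>2*k+1\<bar> \<ge> 1" by presburger
  then have "\<bar>real_of_int (2*k+1)\<bar> \<ge> 1" by linarith
  then show ?thesis by simp
qed

lemma inv_odd_le1: "\<bar>1 / (2 * real_of_int k + 1)\<bar> \<le> 1"
  using odd_abs_ge1[of k] odd_ne0[of k]
  by (simp add: abs_div divide_le_eq_1)

lemma even_sq_ne_odd_sq: "(2*real m)^2 - (2*real j - 1)^2 \<noteq> 0"
proof
  assume h: "(2*real m)^2 - (2*real j - 1)^2 = 0"
  have a: "2*real m - (2*real j - 1) = 2*real_of_int (int m - int j) + 1" by simp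
  have b: "2*real m + (2*real j - 1) = 2*real_of_int (int m + int j - 1) + 1" by simp
  have "(2*real m - (2*real j - 1)) * (2*real m + (2*real j - 1)) = 0"
    using h by (simp add: algebra_simps power2_eq_square)
  then have "(2*real_of_int (int m - int j) + 1) * (2*real_of_int(int m + int j - 1)+1) = 0"
    by (simp only: a[symmetric] b[symmetric])
  then show False using odd_ne0 by (simp only: mult_eq_0_iff) blast
qed

lemma Dp_even_ne0: "Dp n (2*real m) \<noteq> 0"
  unfolding Dp_def using even_sq_ne_odd_sq by (simp add: prod_zero_iff)

lemma Dp_at0_ne0: "Dp n 0 \<noteq> 0"
  using Dp_even_ne0[of n 0] by simp

lemma odd_form1: "2*real i + 1 - 2*real n = 2*real_of_int (int i - int n) + 1" by simp
lemma odd_form2: "2*real i + 1 + 2*real n = 2*real_of_int (int i + int n) + 1" by simp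

lemma Dp_ratio: "Dp n (2*real m) = Dp n 0 * (\<Prod>i<m. (2*real i + 1 + 2*real n)/(2*real i + 1 - 2*real n))"
proof (induction m)
  case 0 then show ?case by simp
next
  case (Suc m)
  have ne: "2*real m + 1 - 2*real n \<noteq> 0" unfolding odd_form1 by (rule odd_ne0)
  have "Dp n (2*real (Suc m)) = Dp n (2*real m + 2)" by (simp add: add.commute)
  also have "\<dots> = Dp n (2*real m) * (2*real m + 1 + 2*real n) / (2*real m + 1 - 2*real n)"
    using Dp_shift[of n "2*real m"] ne by (simp add: field_simps)
  finally show ?case using Suc by simp
qed

lemma sp_ratio: "sp n (2*real m) = (\<Sum>i<m. 1/(2*real i + 1 + 2*real n) - 1/(2*real i + 1 - 2*real n))"
proof (induction m)
  case 0 then show ?case by simp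
next
  case (Suc m)
  have "sp n (2*real (Suc m)) = sp n (2*real m + 2)" by (simp add: add.commute)
  also have "\<dots> = sp n (2*real m) - 1/(2*real m + 1 - 2*real n) + 1/(2*real m + 1 + 2*real n)"
    by (rule sp_shift)
  finally show ?case using Suc by simp
qed

lemma abs_Dp_ge: "\<bar>Dp n 0\<bar> \<le> \<bar>Dp n (2*real m)\<bar>"
proof -
  have "1 \<le> (\<Prod>i<m. \<bar>(2*real i + 1 + 2*real n)/(2*real i + 1 - 2*real n)\<bar>)"
  proof (rule prod_ge_1)
    fix i assume "i \<in> {..<m}"
    have ne: "2*real i + 1 - 2*real n \<noteq> 0" unfolding odd_form1 by (rule odd_ne0)
    have "\<bar>2*real i + 1 - 2*real n\<bar> \<le> \<bar>2*real i + 1 + 2*real n\<bar>" by simp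
    then show "1 \<le> \<bar>(2*real i + 1 + 2*real n)/(2*real i + 1 - 2*real n)\<bar>"
      using ne by (simp add: abs_div le_divide_eq_1)
  qed
  then have "\<bar>Dp n 0\<bar> * 1 \<le> \<bar>Dp n 0\<bar> * (\<Prod>i<m. \<bar>(2*real i + 1 + 2*real n)/(2*real i + 1 - 2*real n)\<bar>)"
    by (intro mult_left_mono) auto
  then show ?thesis by (simp add: Dp_ratio abs_mult abs_prod)
qed

lemma abs_sp_le_m: "\<bar>sp n (2*real m)\<bar> \<le> 2*real m"
proof -
  have "\<bar>sp n (2*real m)\<bar> \<le> (\<Sum>i<m. \<bar>1/(2*real i + 1 + 2*real n) - 1/(2*real i + 1 - 2*real n)\<bar>)"
    unfolding sp_ratio by (rule sum_abs)
  also have "\<dots> \<le> (\<Sum>i<m. 2)"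
  proof (rule sum_mono)
    fix i assume "i \<in> {..<m}"
    have "\<bar>1/(2*real i + 1 + 2*real n)\<bar> \<le> 1" unfolding odd_form2 by (rule inv_odd_le1)
    moreover have "\<bar>1/(2*real i + 1 - 2*real n)\<bar> \<le> 1" unfolding odd_form1 by (rule inv_odd_le1)
    ultimately show "\<bar>1/(2*real i + 1 + 2*real n) - 1/(2*real i + 1 - 2*real n)\<bar> \<le> 2" by linarith
  qed
  finally show ?thesis by simp
qed

lemma abs_sp_le_n: "\<bar>sp n (2*real m)\<bar> \<le> 2*real n"
proof -
  have "\<bar>sp n (2*real m)\<bar> \<le> (\<Sum>j=1..n. \<bar>1/(2*real m - (2*real j - 1)) + 1/(2*real m + (2*real j - 1))\<bar>)"
    unfolding sp_def by (rule sum_abs)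
  also have "\<dots> \<le> (\<Sum>j=1..n. 2)"
  proof (rule sum_mono)
    fix j assume "j \<in> {1..n}"
    have a: "2*real m - (2*real j - 1) = 2*real_of_int (int m - int j) + 1" by simp
    have b: "2*real m + (2*real j - 1) = 2*real_of_int (int m + int j - 1) + 1" by simp
    have "\<bar>1/(2*real m - (2*real j - 1))\<bar> \<le> 1" unfolding a by (rule inv_odd_le1)
    moreover have "\<bar>1/(2*real m + (2*real j - 1))\<bar> \<le> 1" unfolding b by (rule inv_odd_le1)
    ultimately show "\<bar>1/(2*real m - (2*real j - 1)) + 1/(2*real m + (2*real j - 1))\<bar> \<le> 2" by linarith
  qed
  finally show ?thesis by simp
qed

definition Gf :: "nat \<Rightarrow> real \<Rightarrow> real" where
  "Gf n y = ((y + (2*real n - 1)) * sp n y - 1) / (2*(2*real n - 1) * Dp n y)"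

lemma G_alg:
  fixes D D2 sv sv2 p q a :: real
  assumes "D2*p = D*q" "sv2 = sv - 1/p + 1/q" "D\<noteq>0" "D2\<noteq>0" "p\<noteq>0" "q\<noteq>0" "a\<noteq>0" "q - 2 - p = 2*a"
  shows "((q-2)* sv - 1)/(2*a*D) - (q* sv2 - 1)/(2*a*D2) = sv/D"
proof -
  have D2: "D2 = D*q/p" using assms(1,5) by (simp add: field_simps)
  have e: "q* sv2 - 1 = q*(p* sv - 1)/p" unfolding assms(2) using assms(5,6) by (simp add: field_simps)
  have "(q* sv2 - 1)/(2*a*D2) = (q*(p* sv - 1)/p) / (2*a*(D*q/p))" unfolding e D2 ..
  also have "\<dots> = (p* sv - 1)/(2*a*D)" using assms(3-7) by (simp add: field_simps)
  finally have "(q* sv2 - 1)/(2*a*D2) = (p* sv - 1)/(2*a*D)" .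
  moreover have "((q-2)* sv - 1)/(2*a*D) - (p* sv - 1)/(2*a*D) = sv/D"
  proof -
    have "((q-2)* sv - 1) - (p* sv - 1) = 2*a* sv" using assms(8) by (simp add: algebra_simps)
    then show ?thesis using assms(3,7) by (simp add: diff_divide_distrib[symmetric])
  qed
  ultimately show ?thesis by simp
qed

lemma G_diff:
  assumes "n \<ge> 1"
  shows "Gf n (2*real m) - Gf n (2*real m + 2) = sp n (2*real m) / Dp n (2*real m)"
proof -
  define y where "y = 2*real m"
  have p: "y + 1 - 2*real n \<noteq> 0" unfolding y_def odd_form1 by (rule odd_ne0)
  have q: "y + 1 + 2*real n \<noteq> 0" unfolding y_def odd_form2 by (rule odd_ne0)
  have a: "2*real n - 1 \<noteq> 0" using assms by simp
  have D: "Dp n y \<noteq> 0" unfolding y_def by (rule Dp_even_ne0)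
  have D2: "Dp n (y+2) \<noteq> 0" using Dp_even_ne0[of n "Suc m"] unfolding y_def by (simp add: add.commute)
  have e1: "y + (2*real n - 1) = (y + 1 + 2*real n) - 2" by simp
  have e2: "y + 2 + (2*real n - 1) = (y + 1 + 2*real n)" by simp
  have "(((y + 1 + 2*real n) - 2) * sp n y - 1) / (2*(2*real n - 1) * Dp n y)
     - ((y + 1 + 2*real n) * sp n (y+2) - 1) / (2*(2*real n - 1) * Dp n (y+2)) = sp n y / Dp n y"
    by (rule G_alg[OF Dp_shift sp_shift D D2 p q a]) simp
  then show ?thesis unfolding Gf_def y_def[symmetric] e1 e2 .
qed

lemma Dp_ge:
  assumes "n \<ge> 1" "y \<ge> 2*real n"
  shows "Dp n y \<ge> y^2 - 1"
  using assms
proof (induction n)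
  case 0 then show ?case by simp
next
  case (Suc n)
  show ?case
  proof (cases "n = 0")
    case True then show ?thesis by (simp add: Dp_Suc)
  next
    case False
    have y0: "y \<ge> 0" using Suc.prems by simp
    have IH: "Dp n y \<ge> y^2 - 1" using Suc False by simp
    have "(2*real n + 2)^2 \<le> y^2" using Suc.prems y0 by (intro power_mono) auto
    then have f: "y^2 - (2*real (Suc n) - 1)^2 \<ge> 1" by (simp add: power2_eq_square algebra_simps)
    have "1 \<le> (2*real n + 2)^2" by (rule one_le_power) simp
    then have "y^2 \<ge> 1" using \<open>(2*real n + 2)^2 \<le> y^2\<close> by linarith
    then have "(y^2 - 1) * 1 \<le> Dp n y * (y^2 - (2*real (Suc n) - 1)^2)"
      using IH f by (intro mult_mono) auto
    then show ?thesis by (simp add: Dp_Suc)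
  qed
qed


lemma G_bound_lim:
  assumes "n \<ge> 1"
  shows "((\<lambda>m. ((2*real m + (2*real n - 1))*(2*real n) + 1)/(2*(2*real n - 1)*((2*real m)^2 - 1))) \<longlongrightarrow> 0) at_top"
  using assms by real_asymp

lemma G_lim:
  assumes "n \<ge> 1"
  shows "(\<lambda>m. Gf n (2*real m)) \<longlonglongrightarrow> 0"
proof (rule Lim_null_comparison[OF _ G_bound_lim[OF assms]])
  show "\<forall>\<^sub>F m in sequentially. norm (Gf n (2*real m)) \<le> ((2*real m + (2*real n - 1))*(2*real n) + 1)/(2*(2*real n - 1)*((2*real m)^2 - 1))"
    using eventually_ge_at_top[of "n+1"]
  proof eventually_elim
    case (elim m)
    define y where "y = 2*real m"
    define a where "a = 2*real n - 1"
    have a1: "a \<ge> 1" using assms unfolding a_def by simp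
    have y2: "y \<ge> 2*real n" "y \<ge> 2" using elim assms unfolding y_def by simp_all
    have "(2::real)^2 \<le> y^2" using y2 by (intro power_mono) auto
    then have yy: "y^2 - 1 > 0" by simp
    have D: "Dp n y \<ge> y^2 - 1" using Dp_ge[OF assms y2(1)] .
    have spb: "\<bar>sp n y\<bar> \<le> 2*real n" unfolding y_def by (rule abs_sp_le_n)
    have num: "\<bar>(y + a) * sp n y - 1\<bar> \<le> (y + a)*(2*real n) + 1"
    proof -
      have "\<bar>(y + a) * sp n y\<bar> = (y+a) * \<bar>sp n y\<bar>" using y2 a1 by (simp add: abs_mult)
      also have "\<dots> \<le> (y+a)*(2*real n)" using spb y2 a1 by (intro mult_left_mono) auto
      finally show ?thesis by linarith
    qed
    have "norm (Gf n y) = \<bar>(y + a) * sp n y - 1\<bar> / (2*a*Dp n y)"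
      unfolding Gf_def a_def[symmetric] using D yy a1 by (simp add: abs_div abs_mult)
    also have "\<dots> \<le> ((y + a)*(2*real n) + 1) / (2*a*(y^2 - 1))"
      using num D yy a1 by (intro frac_le) auto
    finally show ?case unfolding y_def a_def .
  qed
qed

lemma core_sums_G:
  assumes "n \<ge> 1"
  shows "(\<lambda>i. sp n (2*real (Suc i)) / Dp n (2*real (Suc i))) sums (Gf n 2)"
proof -
  have lim: "(\<lambda>i. Gf n (2*real (Suc i))) \<longlonglongrightarrow> 0"
    using LIMSEQ_Suc[OF G_lim[OF assms]] .
  have "(\<lambda>i. Gf n (2*real (Suc i)) - Gf n (2*real (Suc (Suc i)))) sums (Gf n (2*real (Suc 0)) - 0)"
    by (rule telescope_sums'[OF lim])
  moreover have "\<And>i. Gf n (2*real (Suc i)) - Gf n (2*real (Suc (Suc i))) = sp n (2*real (Suc i)) / Dp n (2*real (Suc i))"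
    using G_diff[OF assms] by (metis of_nat_Suc distrib_left mult.right_neutral add.commute)
  ultimately show ?thesis by simp
qed

lemma Gf_2:
  assumes "n \<ge> 1"
  shows "Gf n 2 = -1/(2*(2*real n - 1)*Dp n 0)"
proof -
  have "Gf n (2*real 0) - Gf n (2*real 0 + 2) = sp n (2*real 0) / Dp n (2*real 0)"
    by (rule G_diff[OF assms])
  then have "Gf n 2 = Gf n 0" by simp
  then show ?thesis by (simp add: Gf_def)
qed

lemma core_final:
  assumes "n \<ge> 1"
  shows "(\<lambda>i. 2*Dp (n-1) 0 * sp n (2*real (Suc i)) / Dp n (2*real (Suc i))) sums (1/(2*real n - 1)^3)"
proof -
  have s: "(\<lambda>i. 2*Dp (n-1) 0 * (sp n (2*real (Suc i)) / Dp n (2*real (Suc i)))) sums (2*Dp (n-1) 0 * Gf n 2)"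
    by (rule sums_mult[OF core_sums_G[OF assms]])
  obtain k where k: "n = Suc k" using assms by (cases n) auto
  have D: "Dp n 0 = Dp (n-1) 0 * (0 - (2*real n - 1)^2)" unfolding k by (simp add: Dp_Suc)
  have ne: "Dp (n-1) 0 \<noteq> 0" by (rule Dp_at0_ne0)
  have a: "2*real n - 1 \<noteq> 0" using assms by simp
  have alg: "\<And>d a::real. d \<noteq> 0 \<Longrightarrow> a \<noteq> 0 \<Longrightarrow> 2*d*(-1/(2*a*(d*(0-a^2)))) = 1/a^3"
    by (simp add: field_simps power2_eq_square power3_eq_cube)
  have "2*Dp (n-1) 0 * Gf n 2 = 1/(2*real n - 1)^3"
    unfolding Gf_2[OF assms] D by (rule alg[OF ne a])
  with s show ?thesis by (simp add: mult.assoc)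
qed

lemma rec0_alg:
  fixes M E S c u :: real
  assumes "c \<noteq> u" "c \<noteq> 0"
  shows "M*E*(S/c + 1/c^2) - M*(E*u/(u-c))*((S + 1/(c-u))/c + 1/c^2) = M*E*(S+1/(c-u))/(c-u)"
proof -
  define d where "d = c - u"
  have d: "d \<noteq> 0" using assms d_def by auto
  have u: "u = c - d" "u - c = -d" using d_def by auto
  show ?thesis unfolding u d_def[symmetric] using d assms(2)
    by (simp add: field_simps power2_eq_square)
qed

lemma rec_alg_d:
  fixes M E S c d P K :: real
  assumes "d \<noteq> 0" "c \<noteq> 0" "c - d \<noteq> 0" "P \<noteq> 0"
  shows "M*E*(S/(P*c) + (K+2)/(P*c*c)) - M*(E*(c-d)/(-d))*((S + 1/d)/(P*c) + (K+2)/(P*c*c))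
        + M*(E*(c-d)/(-d))*((S + 1/d)/P + (K+1)/(P*c))/(c-d) = 0"
  using assms by (simp add: field_simps)

lemma rec_alg:
  fixes M E S c u P K :: real
  assumes "c \<noteq> u" "c \<noteq> 0" "u \<noteq> 0" "P \<noteq> 0"
  shows "M*E*(S/(P*c) + (K+2)/(P*c*c)) - M*(E*u/(u-c))*((S + 1/(c-u))/(P*c) + (K+2)/(P*c*c))
        + M*(E*u/(u-c))*((S + 1/(c-u))/P + (K+1)/(P*c))/u = 0"
proof -
  define d where "d = c - u"
  have u: "u = c - d" using d_def by auto
  have "u - c = -d" using d_def by auto
  show ?thesis using rec_alg_d[of d c P M E S K] assms unfolding u \<open>u - c = -d\<close>[unfolded u]  by (simp add: d_def)
qed

definition cc :: "nat \<Rightarrow> real" where "cc m = 4*(real m)^2"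
definition uu :: "nat \<Rightarrow> real" where "uu j = (2*real j - 1)^2"
definition eps :: "nat \<Rightarrow> nat \<Rightarrow> real" where "eps m N = Dp N 0 / Dp N (2*real m)"
definition Sm :: "nat \<Rightarrow> nat \<Rightarrow> real" where "Sm m N = sp N (2*real m) / (4*real m)"
definition rt :: "nat \<Rightarrow> nat \<Rightarrow> nat \<Rightarrow> real" where
  "rt m N k = 8*real m * eps m N * (Sm m N / cc m^(k+1) + real (k+1) / cc m^(k+2))"

lemma cc_eq: "cc m = (2*real m)^2" by (simp add: cc_def power2_eq_square)
lemma cc_ne_uu: "cc m \<noteq> uu j"
  using even_sq_ne_odd_sq[of m j] by (simp add: cc_eq uu_def)
lemma uu_ne0: "j \<ge> 1 \<Longrightarrow> uu j \<noteq> 0" by (simp add: uu_def)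
lemma cc_ge: "m \<ge> 1 \<Longrightarrow> cc m \<ge> 4"
proof -
  assume "m \<ge> 1"
  then have "(1::real) \<le> real m ^2" by (simp add: one_le_power)
  then show ?thesis by (simp add: cc_def)
qed

lemma eps_Suc: "eps m (Suc N) = eps m N * uu (Suc N) / (uu (Suc N) - cc m)"
proof -
  have D: "Dp N (2*real m) \<noteq> 0" by (rule Dp_even_ne0)
  have c: "cc m - uu (Suc N) \<noteq> 0" using cc_ne_uu by simp
  have c2: "uu (Suc N) - cc m \<noteq> 0" using cc_ne_uu by (metis eq_iff_diff_eq_0)
  have "eps m (Suc N) = Dp N 0 * (0 - uu (Suc N)) / (Dp N (2*real m) * (cc m - uu (Suc N)))"
    unfolding eps_def Dp_Suc by (simp add: cc_eq uu_def)
  also have "\<dots> = eps m N * uu (Suc N) / (uu (Suc N) - cc m)"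
    unfolding eps_def using D c c2 by (simp add: field_simps)
  finally show ?thesis .
qed

lemma Sm_Suc:
  assumes "m \<ge> 1"
  shows "Sm m (Suc N) = Sm m N + 1/(cc m - uu (Suc N))"
proof -
  define a where "a = 2*real (Suc N) - 1"
  define y where "y = 2*real m"
  have y: "y \<noteq> 0" using assms unfolding y_def by simp
  have f1: "y - a = 2*real_of_int (int m - int N - 1) + 1" unfolding y_def a_def by simp
  have f2: "y + a = 2*real_of_int (int m + int N) + 1" unfolding y_def a_def by simp
  have p: "y - a \<noteq> 0" "y + a \<noteq> 0" unfolding f1 f2 by (rule odd_ne0)+
  have eq: "1/(y - a) + 1/(y + a) = 2*y/(y^2 - a^2)"
    using p by (simp add: field_simps power2_eq_square)
  have "Sm m (Suc N) = (sp N y + (1/(y - a) + 1/(y + a)))/(2*y)"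
    unfolding Sm_def sp_Suc a_def y_def by simp
  also have "\<dots> = sp N y/(2*y) + (2*y/(y^2-a^2))/(2*y)" unfolding eq by (simp add: add_divide_distrib)
  also have "\<dots> = Sm m N + 1/(y^2 - a^2)" unfolding Sm_def y_def using y y_def by simp
  finally show ?thesis unfolding y_def a_def cc_eq uu_def .
qed

lemma rt_rec0:
  assumes "m \<ge> 1"
  shows "rt m N 0 - rt m (Suc N) 0 = 8*real m * eps m N * Sm m (Suc N) / (cc m - uu (Suc N))"
proof -
  have c: "cc m \<noteq> 0" using cc_ge[OF assms] by simp
  show ?thesis unfolding rt_def eps_Suc Sm_Suc[OF assms]
    using rec0_alg[OF cc_ne_uu[of m "Suc N"] c, of "8*real m" "eps m N" "Sm m N"] by (simp add: power2_eq_square)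
qed

lemma rt_rec:
  assumes "m \<ge> 1"
  shows "rt m N (Suc k) - rt m (Suc N) (Suc k) + rt m (Suc N) k / uu (Suc N) = 0"
proof -
  have c: "cc m \<noteq> 0" using cc_ge[OF assms] by simp
  have u: "uu (Suc N) \<noteq> 0" by (rule uu_ne0) simp
  have P: "cc m ^ (k+1) \<noteq> 0" using c by simp
  have e1: "cc m ^ (Suc k + 1) = cc m^(k+1) * cc m" "cc m ^ (Suc k + 2) = cc m^(k+1) * cc m * cc m"
    "cc m ^ (k + 2) = cc m^(k+1) * cc m" by (simp_all add: power_Suc2 mult.assoc)
  have e2: "real (Suc k + 1) = real k + 2" "real (k+1) = real k + 1" by simp_all
  show ?thesis unfolding rt_def eps_Suc Sm_Suc[OF assms] e1 e2
    using rec_alg[OF cc_ne_uu[of m "Suc N"] c u P, of "8*real m" "eps m N" "Sm m N" "real k"] by (simp add: mult.assoc)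
qed

lemma w_eq:
  assumes "m \<ge> 1"
  shows "8*real m * eps m N * Sm m (Suc N) / (cc m - uu (Suc N)) = 2*Dp N 0 * sp (Suc N) (2*real m) / Dp (Suc N) (2*real m)"
proof -
  have D: "Dp N (2*real m) \<noteq> 0" by (rule Dp_even_ne0)
  have c: "cc m - uu (Suc N) \<noteq> 0" using cc_ne_uu by simp
  have m: "real m \<noteq> 0" using assms by simp
  have DS: "Dp (Suc N) (2*real m) = Dp N (2*real m) * (cc m - uu (Suc N))"
    unfolding Dp_Suc by (simp add: cc_eq uu_def)
  show ?thesis unfolding DS eps_def Sm_def using D c m by (simp add: field_simps)
qed


lemma abs_eps_le1: "\<bar>eps m N\<bar> \<le> 1"
proof -
  have D: "Dp N (2*real m) \<noteq> 0" by (rule Dp_even_ne0)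
  have "\<bar>Dp N 0\<bar> \<le> \<bar>Dp N (2*real m)\<bar>" by (rule abs_Dp_ge)
  then show ?thesis unfolding eps_def using D by (simp add: abs_div divide_le_eq_1)
qed

lemma abs_Sm_half: "m \<ge> 1 \<Longrightarrow> \<bar>Sm m N\<bar> \<le> 1/2"
  using abs_sp_le_m[of N m] by (simp add: Sm_def abs_div divide_le_eq)

lemma abs_Sm_N: "m \<ge> 1 \<Longrightarrow> \<bar>Sm m N\<bar> \<le> real N/(2*real m)"
  using abs_sp_le_n[of N m] by (simp add: Sm_def abs_div divide_le_eq field_simps)

lemma rt_bound:
  assumes "m \<ge> 1" "\<bar>Sm m N\<bar> \<le> B"
  shows "\<bar>rt m N k\<bar> \<le> 8*real m * (B/cc m^(k+1) + real(k+1)/cc m^(k+2))"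
proof -
  have c: "cc m > 0" using cc_ge[OF assms(1)] by simp
  have "\<bar>Sm m N / cc m^(k+1) + real (k+1) / cc m^(k+2)\<bar> \<le> \<bar>Sm m N\<bar> / cc m^(k+1) + real (k+1) / cc m^(k+2)"
    using c by (simp add: abs_div) (rule order.trans[OF abs_triangle_ineq], simp add: abs_div)
  also have "\<dots> \<le> B / cc m^(k+1) + real (k+1) / cc m^(k+2)"
    using assms(2) c by (simp add: divide_right_mono)
  finally have X: "\<bar>Sm m N / cc m^(k+1) + real (k+1) / cc m^(k+2)\<bar> \<le> B / cc m^(k+1) + real (k+1) / cc m^(k+2)" .
  have "\<bar>rt m N k\<bar> = 8*real m * \<bar>eps m N\<bar> * \<bar>Sm m N / cc m^(k+1) + real (k+1) / cc m^(k+2)\<bar>"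
    unfolding rt_def by (simp add: abs_mult)
  also have "\<dots> \<le> 8*real m * 1 * (B / cc m^(k+1) + real (k+1) / cc m^(k+2))"
    using abs_eps_le1 X by (intro mult_mono) auto
  finally show ?thesis by simp
qed

lemma rt_bound_N:
  assumes "m \<ge> 1"
  shows "\<bar>rt m N k\<bar> \<le> (real N + real k + 1)/(real m)^2"
proof -
  have c4: "cc m \<ge> 4" using cc_ge[OF assms] .
  have c1: "cc m \<ge> 1" using c4 by simp
  have m1: "real m \<ge> 1" using assms by simp
  have p1: "cc m \<le> cc m^(k+1)" using power_increasing[of 1 "k+1" "cc m"] c1 by simp
  have p2: "cc m^2 \<le> cc m^(k+2)" using power_increasing[of 2 "k+2" "cc m"] c1 by simp
  have h1: "real N/(2*real m)/cc m^(k+1) \<le> real N/(2*real m)/cc m"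
    using p1 c4 m1 by (intro divide_left_mono) auto
  have h2: "real (k+1)/cc m^(k+2) \<le> real (k+1)/cc m^2"
    using p2 c4 by (intro divide_left_mono) auto
  have "\<bar>rt m N k\<bar> \<le> 8*real m * (real N/(2*real m)/cc m^(k+1) + real(k+1)/cc m^(k+2))"
    by (rule rt_bound[OF assms abs_Sm_N[OF assms]])
  also have "\<dots> \<le> 8*real m * (real N/(2*real m)/cc m + real(k+1)/cc m^2)"
    using h1 h2 m1 by (intro mult_left_mono) auto
  also have "\<dots> = real N/(real m)^2 + (real k + 1)/(2*(real m)^3)"
    using m1 by (simp add: cc_def field_simps power2_eq_square power3_eq_cube)
  also have "\<dots> \<le> real N/(real m)^2 + (real k + 1)/((real m)^2)"
  proof -
    have "(real m)^2 \<le> 2*(real m)^3" using m1 by (simp add: power2_eq_square power3_eq_cube)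
    then have "(real k + 1)/(2*(real m)^3) \<le> (real k + 1)/((real m)^2)"
      using m1 by (intro divide_left_mono) auto
    then show ?thesis by simp
  qed
  also have "\<dots> = (real N + real k + 1)/(real m)^2" by (simp add: add_divide_distrib)
  finally show ?thesis .
qed

lemma rt_bound_k:
  assumes "m \<ge> 1" "k \<ge> 1"
  shows "\<bar>rt m N k\<bar> \<le> (real k + 2)/(real m)^2"
proof -
  have c4: "cc m \<ge> 4" using cc_ge[OF assms(1)] .
  have c1: "cc m \<ge> 1" using c4 by simp
  have m1: "real m \<ge> 1" using assms by simp
  have p1: "cc m^2 \<le> cc m^(k+1)" using power_increasing[of 2 "k+1" "cc m"] c1 assms(2) by simp
  have p2: "cc m^2 \<le> cc m^(k+2)" using power_increasing[of 2 "k+2" "cc m"] c1 by simp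
  have h1: "(1/2)/cc m^(k+1) \<le> (1/2)/cc m^2"
    using p1 c4 by (intro divide_left_mono) auto
  have h2: "real (k+1)/cc m^(k+2) \<le> real (k+1)/cc m^2"
    using p2 c4 by (intro divide_left_mono) auto
  have "\<bar>rt m N k\<bar> \<le> 8*real m * ((1/2)/cc m^(k+1) + real(k+1)/cc m^(k+2))"
    by (rule rt_bound[OF assms(1) abs_Sm_half[OF assms(1)]])
  also have "\<dots> \<le> 8*real m * ((1/2)/cc m^2 + real(k+1)/cc m^2)"
    using h1 h2 m1 by (intro mult_left_mono) auto
  also have "\<dots> = (real k + 3/2)/(2*(real m)^3)"
    using m1 by (simp add: cc_def field_simps power2_eq_square power3_eq_cube)
  also have "\<dots> \<le> (real k + 2)/((real m)^2)"
  proof -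
    have "(real m)^2 \<le> 2*(real m)^3" using m1 by (simp add: power2_eq_square power3_eq_cube)
    then have "(real k + 3/2)/(2*(real m)^3) \<le> (real k + 3/2)/((real m)^2)"
      using m1 by (intro divide_left_mono) auto
    also have "\<dots> \<le> (real k + 2)/((real m)^2)" using m1 by (intro divide_right_mono) auto
    finally show ?thesis .
  qed
  finally show ?thesis .
qed

lemma sum_inv_sq: "summable (\<lambda>i. C / (real (Suc i))^2)"
proof -
  have "summable (\<lambda>n. inverse (real n ^ 2))" by (rule inverse_power_summable) simp
  then have "summable (\<lambda>n. inverse (real (Suc n) ^ 2))" by (subst summable_Suc_iff)
  then have "summable (\<lambda>n. C * inverse (real (Suc n) ^ 2))" by (rule summable_mult)
  then show ?thesis by (simp add: divide_inverse)
qed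

lemma summable_rt: "summable (\<lambda>i. rt (Suc i) N k)"
proof (rule summable_comparison_test'[OF sum_inv_sq[of "real N + real k + 1"], of 0])
  fix n :: nat
  show "norm (rt (Suc n) N k) \<le> (real N + real k + 1)/(real (Suc n))^2"
    using rt_bound_N[of "Suc n" N k] by simp
qed

definition rho :: "nat \<Rightarrow> nat \<Rightarrow> real" where "rho N k = (\<Sum>i. rt (Suc i) N k)"

lemma rho_rec0: "rho N 0 - rho (Suc N) 0 = 1/(2*real (Suc N) - 1)^3"
proof -
  have "rho N 0 - rho (Suc N) 0 = (\<Sum>i. rt (Suc i) N 0 - rt (Suc i) (Suc N) 0)"
    unfolding rho_def by (rule suminf_diff[OF summable_rt summable_rt])
  also have "\<dots> = (\<Sum>i. 2*Dp (Suc N - 1) 0 * sp (Suc N) (2*real (Suc i)) / Dp (Suc N) (2*real (Suc i)))"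
    by (simp add: rt_rec0 w_eq del: of_nat_Suc)
  also have "\<dots> = 1/(2*real (Suc N) - 1)^3"
    by (rule sums_unique[symmetric], rule core_final) simp
  finally show ?thesis .
qed

lemma rho_rec: "rho N (Suc k) - rho (Suc N) (Suc k) + rho (Suc N) k / uu (Suc N) = 0"
proof -
  have "(\<lambda>i. rt (Suc i) N (Suc k) - rt (Suc i) (Suc N) (Suc k) + rt (Suc i) (Suc N) k / uu (Suc N))
        sums (rho N (Suc k) - rho (Suc N) (Suc k) + rho (Suc N) k / uu (Suc N))"
    unfolding rho_def by (intro sums_add sums_diff sums_divide summable_sums summable_rt)
  moreover have "(\<lambda>i. rt (Suc i) N (Suc k) - rt (Suc i) (Suc N) (Suc k) + rt (Suc i) (Suc N) k / uu (Suc N)) = (\<lambda>i. 0)"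
    using rt_rec by simp
  ultimately show ?thesis using sums_unique2 sums_zero by metis
qed

primrec e :: "nat \<Rightarrow> nat \<Rightarrow> real" where
  "e 0 j = (if j = 0 then 1 else 0)"
| "e (Suc N) j = e N j + (if j = 0 then 0 else e N (j-1) / uu (Suc N))"

definition T :: "nat \<Rightarrow> nat \<Rightarrow> real" where
  "T N r = (\<Sum>n=1..N. e (n-1) r / (2*real n - 1)^3)"

lemma T_0[simp]: "T 0 r = 0" by (simp add: T_def)
lemma T_Suc: "T (Suc N) r = T N r + e N r / (2*real (Suc N) - 1)^3"
  by (simp add: T_def sum.nat_ivl_Suc')

lemma conv_step:
  fixes e e' \<rho> \<rho>' :: "nat \<Rightarrow> real"
  assumes E: "\<And>j. e' j = e j + (if j = 0 then 0 else e (j-1)/u)"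
    and R0: "\<rho>' 0 = \<rho> 0 - A" and R: "\<And>k. \<rho>' (Suc k) = \<rho> (Suc k) + \<rho>' k/u"
  shows "(\<Sum>j\<le>r. (-1)^j * e' j * \<rho>' (r-j)) = (\<Sum>j\<le>r. (-1)^j * e j * \<rho> (r-j)) - (-1)^r * e r * A"
proof (cases r)
  case 0 then show ?thesis using E by (simp add: R0 algebra_simps)
next
  case (Suc q)
  have split1: "(\<Sum>j\<le>Suc q. (-1)^j * e' j * \<rho>' (Suc q-j))
     = (\<Sum>j\<le>Suc q. (-1)^j * e j * \<rho>' (Suc q-j)) + (\<Sum>j\<le>Suc q. (-1)^j * (if j = 0 then 0 else e (j-1)/u) * \<rho>' (Suc q-j))"
    unfolding E by (simp add: algebra_simps sum.distrib)
  have second: "(\<Sum>j\<le>Suc q. (-1)^j * (if j = 0 then 0 else e (j-1)/u) * \<rho>' (Suc q-j))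
      = - (\<Sum>i\<le>q. (-1)^i * e i * (\<rho>' (q-i)/u))"
    by (subst sum.atMost_Suc_shift) (simp add: sum_negf[symmetric])
  have first: "(\<Sum>j\<le>Suc q. (-1)^j * e j * \<rho>' (Suc q-j))
      = (\<Sum>j\<le>q. (-1)^j * e j * \<rho> (Suc q - j)) + (\<Sum>j\<le>q. (-1)^j * e j * (\<rho>' (q-j)/u)) + (-1)^(Suc q) * e (Suc q) * (\<rho> 0 - A)"
  proof -
    have "(\<Sum>j\<le>q. (-1)^j * e j * \<rho>' (Suc q-j)) = (\<Sum>j\<le>q. (-1)^j * e j * \<rho> (Suc q - j) + (-1)^j * e j * (\<rho>' (q-j)/u))"
    proof (rule sum.cong[OF refl])
      fix j assume "j \<in> {..q}"
      then have "Suc q - j = Suc (q - j)" by auto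
      then show "(-1)^j * e j * \<rho>' (Suc q-j) = (-1)^j * e j * \<rho> (Suc q - j) + (-1)^j * e j * (\<rho>' (q-j)/u)"
        by (simp add: R algebra_simps)
    qed
    then show ?thesis by (simp add: sum.distrib R0)
  qed
  have last: "(\<Sum>j\<le>Suc q. (-1)^j * e j * \<rho> (Suc q-j)) = (\<Sum>j\<le>q. (-1)^j * e j * \<rho> (Suc q - j)) + (-1)^(Suc q) * e (Suc q) * \<rho> 0"
    by simp
  show ?thesis unfolding Suc split1 second first last by (simp add: algebra_simps)
qed

lemma fin_id: "(-1)^r * T N r = rho 0 r - (\<Sum>j\<le>r. (-1)^j * e N j * rho N (r-j))"
proof (induction N arbitrary: r)
  case 0
  have "(\<Sum>j\<le>r. (-1)^j * e 0 j * rho 0 (r-j)) = rho 0 r"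
    by (subst sum.atMost_shift) simp
  then show ?case by simp
next
  case (Suc N)
  have "(\<Sum>j\<le>r. (-1)^j * e (Suc N) j * rho (Suc N) (r-j))
      = (\<Sum>j\<le>r. (-1)^j * e N j * rho N (r-j)) - (-1)^r * e N r * (1/(2*real (Suc N) - 1)^3)"
  proof (rule conv_step)
    show "\<And>j. e (Suc N) j = e N j + (if j = 0 then 0 else e N (j-1) / uu (Suc N))" by simp
    show "rho (Suc N) 0 = rho N 0 - 1/(2*real (Suc N) - 1)^3" using rho_rec0[of N] by simp
    show "\<And>k. rho (Suc N) (Suc k) = rho N (Suc k) + rho (Suc N) k / uu (Suc N)"
      using rho_rec[of N] by (simp add: algebra_simps)
  qed
  then show ?case using Suc[of r] by (simp add: T_Suc algebra_simps)
qed

definition Ls :: "nat \<Rightarrow> nat \<Rightarrow> nat list set" where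
  "Ls j N = {ns. length ns = j \<and> sorted_wrt (<) ns \<and> (\<forall>n\<in>set ns. 1 \<le> n \<and> n \<le> N)}"

lemma finite_Ls: "finite (Ls j N)"
proof -
  have "Ls j N \<subseteq> {xs. set xs \<subseteq> {..N} \<and> length xs = j}" unfolding Ls_def by auto
  moreover have "finite {xs. set xs \<subseteq> {..N} \<and> length xs = j}" by (rule finite_lists_length_eq) simp
  ultimately show ?thesis by (rule finite_subset)
qed

lemma Ls_0: "Ls 0 N = {[]}" by (auto simp: Ls_def)
lemma Ls_Suc_0: "Ls (Suc j) 0 = {}" by (auto simp: Ls_def length_Suc_conv)

lemma Ls_Suc: "Ls (Suc j) (Suc N) = Ls (Suc j) N \<union> (\<lambda>xs. xs @ [Suc N]) ` Ls j N"
proof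
  show "Ls (Suc j) (Suc N) \<subseteq> Ls (Suc j) N \<union> (\<lambda>xs. xs @ [Suc N]) ` Ls j N"
  proof
    fix ns assume ns: "ns \<in> Ls (Suc j) (Suc N)"
    show "ns \<in> Ls (Suc j) N \<union> (\<lambda>xs. xs @ [Suc N]) ` Ls j N"
    proof (cases "Suc N \<in> set ns")
      case False
      then have "ns \<in> Ls (Suc j) N" using ns unfolding Ls_def by (auto simp: le_Suc_eq)
      then show ?thesis by simp
    next
      case True
      have ne: "ns \<noteq> []" using ns unfolding Ls_def by auto
      define xs where "xs = butlast ns"
      define x where "x = last ns"
      have nsx: "ns = xs @ [x]" unfolding xs_def x_def using ne by simp
      have sw: "sorted_wrt (<) xs" "\<forall>y\<in>set xs. y < x"
        using ns unfolding Ls_def nsx by (auto simp: sorted_wrt_append)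
      have xle: "x \<le> Suc N" using ns unfolding Ls_def nsx by auto
      have xeq: "x = Suc N"
      proof (rule ccontr)
        assume "x \<noteq> Suc N"
        then have "Suc N \<in> set xs" using True nsx by auto
        then have "Suc N < x" using sw by auto
        then show False using xle by simp
      qed
      have "xs \<in> Ls j N"
        using ns sw xeq unfolding Ls_def nsx by (auto simp: less_Suc_eq_le)
      then show ?thesis using nsx xeq by auto
    qed
  qed
next
  show "Ls (Suc j) N \<union> (\<lambda>xs. xs @ [Suc N]) ` Ls j N \<subseteq> Ls (Suc j) (Suc N)"
  proof
    fix ns assume "ns \<in> Ls (Suc j) N \<union> (\<lambda>xs. xs @ [Suc N]) ` Ls j N"
    then show "ns \<in> Ls (Suc j) (Suc N)"
    proof
      assume "ns \<in> Ls (Suc j) N" then show ?thesis unfolding Ls_def by auto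
    next
      assume "ns \<in> (\<lambda>xs. xs @ [Suc N]) ` Ls j N"
      then obtain xs where xs: "xs \<in> Ls j N" "ns = xs @ [Suc N]" by auto
      have "\<forall>y\<in>set xs. y < Suc N" using xs(1) unfolding Ls_def by (auto simp: less_Suc_eq_le)
      then show ?thesis using xs unfolding Ls_def by (auto simp: sorted_wrt_append)
    qed
  qed
qed

lemma Ls_disj: "Ls (Suc j) N \<inter> (\<lambda>xs. xs @ [Suc N]) ` Ls j N = {}"
  unfolding Ls_def by auto

definition wt :: "nat list \<Rightarrow> real" where
  "wt ns = (\<Prod>i<length ns. 1/(2*real (ns!i) - 1)^2)"

lemma wt_snoc: "wt (xs @ [x]) = wt xs / uu x"
  unfolding wt_def uu_def by (simp add: prod.lessThan_Suc nth_append)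

lemma wt_nonneg: "(\<forall>n\<in>set ns. 1 \<le> n) \<Longrightarrow> wt ns \<ge> 0"
  unfolding wt_def by (intro prod_nonneg) auto

lemma e_0: "e N 0 = 1" by (induction N) auto

lemma sum_wt: "sum wt (Ls j N) = e N j"
proof (induction N arbitrary: j)
  case 0 then show ?case by (cases j) (auto simp: Ls_0 Ls_Suc_0 wt_def)
next
  case (Suc N)
  show ?case
  proof (cases j)
    case 0 then show ?thesis by (simp add: Ls_0 wt_def e_0)
  next
    case (Suc i)
    have "sum wt (Ls (Suc i) (Suc N)) = sum wt (Ls (Suc i) N) + sum wt ((\<lambda>xs. xs @ [Suc N]) ` Ls i N)"
      unfolding Ls_Suc by (rule sum.union_disjoint) (auto simp: finite_Ls Ls_disj)
    also have "sum wt ((\<lambda>xs. xs @ [Suc N]) ` Ls i N) = (\<Sum>xs\<in>Ls i N. wt xs / uu (Suc N))"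
      by (subst sum.reindex) (auto simp: inj_on_def wt_snoc)
    also have "\<dots> = e N i / uu (Suc N)" by (simp add: sum_divide_distrib[symmetric] Suc.IH)
    finally show ?thesis using Suc.IH Suc by simp
  qed
qed

definition wt3 :: "nat list \<Rightarrow> real" where
  "wt3 ns = wt (butlast ns) / (2*real (last ns) - 1)^3"

lemma sum_wt3: "sum wt3 (Ls (Suc r) N) = T N r"
proof (induction N)
  case 0 then show ?case by (simp add: Ls_Suc_0)
next
  case (Suc N)
  have "sum wt3 (Ls (Suc r) (Suc N)) = sum wt3 (Ls (Suc r) N) + sum wt3 ((\<lambda>xs. xs @ [Suc N]) ` Ls r N)"
    unfolding Ls_Suc by (rule sum.union_disjoint) (auto simp: finite_Ls Ls_disj)
  also have "sum wt3 ((\<lambda>xs. xs @ [Suc N]) ` Ls r N) = (\<Sum>xs\<in>Ls r N. wt xs / (2*real (Suc N) - 1)^3)"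
    by (subst sum.reindex) (auto simp: inj_on_def wt3_def)
  also have "\<dots> = e N r / (2*real (Suc N) - 1)^3" by (simp add: sum_divide_distrib[symmetric] sum_wt)
  finally show ?case using Suc.IH by (simp add: T_Suc)
qed

lemma exhaust:
  fixes f :: "'a \<Rightarrow> real"
  assumes nn: "\<And>x. x \<in> A \<Longrightarrow> 0 \<le> f x" and sub: "\<And>N. F N \<subseteq> A" and fin: "\<And>N. finite (F N)"
    and mono: "\<And>N. F N \<subseteq> F (Suc N)" and cover: "\<And>X. finite X \<Longrightarrow> X \<subseteq> A \<Longrightarrow> \<exists>N. X \<subseteq> F N"
    and bd: "\<And>N. sum f (F N) \<le> C"
  shows "(\<lambda>N. sum f (F N)) \<longlonglongrightarrow> infsum f A"
proof -
  have subX: "sum f X \<le> sum f (F N)" if "finite X" "X \<subseteq> F N" for X N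
  proof (rule sum_mono2[OF fin that(2)])
    fix b assume "b \<in> F N - X"
    then have "b \<in> A" using sub[of N] by blast
    then show "0 \<le> f b" by (rule nn)
  qed
  have inc: "incseq (\<lambda>N. sum f (F N))"
  proof (rule incseq_SucI)
    fix N show "sum f (F N) \<le> sum f (F (Suc N))"
      by (rule subX[OF fin mono])
  qed
  have bX: "sum f X \<le> C" if X: "finite X" "X \<subseteq> A" for X
  proof -
    obtain N where N: "X \<subseteq> F N" using cover[OF X] by blast
    have "sum f X \<le> sum f (F N)" by (rule subX[OF X(1) N])
    also have "\<dots> \<le> C" by (rule bd)
    finally show ?thesis .
  qed
  have ev: "eventually (\<lambda>X. sum f X \<le> C) (finite_subsets_at_top A)"
    by (rule eventually_finite_subsets_at_top_weakI) (rule bX)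
  have summ: "f summable_on A"
    by (rule nonneg_bounded_partial_sums_imp_summable_on[OF nn ev])
  have bdd: "bdd_above (range (\<lambda>N. sum f (F N)))" using bd by (auto simp: bdd_above_def)
  define L where "L = (SUP N. sum f (F N))"
  have lim: "(\<lambda>N. sum f (F N)) \<longlonglongrightarrow> L" unfolding L_def by (rule LIMSEQ_incseq_SUP[OF bdd inc])
  have "infsum f A \<le> L"
  proof (rule infsum_le_finite_sums[OF summ])
    fix X assume X: "finite X" "X \<subseteq> A"
    obtain N where N: "X \<subseteq> F N" using cover[OF X] by blast
    have "sum f X \<le> sum f (F N)" by (rule subX[OF X(1) N])
    also have "\<dots> \<le> L" using incseq_le[OF inc lim] .
    finally show "sum f X \<le> L" .
  qed
  moreover have "L \<le> infsum f A"
  proof (rule LIMSEQ_le_const2[OF lim], intro exI allI impI)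
    fix N
    have h: "(f has_sum infsum f A) A" by (rule has_sum_infsum[OF summ])
    show "sum f (F N) \<le> infsum f A"
    proof (rule finite_sum_le_has_sum[OF h fin sub])
      fix x assume "x \<in> A - F N"
      then show "0 \<le> f x" using nn by blast
    qed
  qed
  ultimately show ?thesis using lim by simp
qed

lemma uu_pos: "n \<ge> 1 \<Longrightarrow> uu n > 0" by (simp add: uu_def)

definition EE :: "nat \<Rightarrow> real" where "EE N = (\<Prod>n=1..N. 1 + 1/uu n)"

lemma EE_Suc: "EE (Suc N) = EE N * (1 + 1/uu (Suc N))" by (simp add: EE_def prod.nat_ivl_Suc')

lemma e_bound: "0 \<le> e N j \<and> e N j \<le> EE N"
proof (induction N arbitrary: j)
  case 0 then show ?case by (simp add: EE_def)
next
  case (Suc N)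
  have u: "uu (Suc N) > 0" by (rule uu_pos) simp
  have EEnn: "EE N \<ge> 0" using Suc[of j] by linarith
  have a: "0 \<le> (if j = 0 then 0 else e N (j-1) / uu (Suc N))" using Suc u by simp
  have b: "(if j = 0 then 0 else e N (j-1) / uu (Suc N)) \<le> EE N / uu (Suc N)"
    using Suc u EEnn by (simp add: divide_right_mono)
  have "e (Suc N) j \<le> EE N + EE N / uu (Suc N)" using Suc[of j] b by simp
  also have "\<dots> = EE (Suc N)" by (simp add: EE_Suc algebra_simps)
  finally show ?case using Suc[of j] a by simp
qed

lemma ineq1:
  fixes x :: real assumes "x \<ge> 1"
  shows "1/x^2 + 2/(x+2) \<le> 2/x"
proof -
  have x0: "x > 0" "x + 2 > 0" using assms by auto
  have "1/x^2 + 2/(x+2) = (x + 2 + 2*x^2)/(x^2*(x+2))" using x0 by (simp add: field_simps power2_eq_square)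
  also have "\<dots> \<le> (2*x*(x+2))/(x^2*(x+2))"
    using assms x0 by (intro divide_right_mono) (auto simp: algebra_simps power2_eq_square)
  also have "\<dots> = 2/x" using x0 by (simp add: power2_eq_square)
  finally show ?thesis .
qed

lemma sum_inv_uu: "(\<Sum>n=1..N. 1/uu n) \<le> 2 - 2/(2*real N + 1)"
proof (induction N)
  case 0 then show ?case by simp
next
  case (Suc N)
  have "(\<Sum>n=1..Suc N. 1/uu n) = (\<Sum>n=1..N. 1/uu n) + 1/(2*real N + 1)^2"
    by (simp add: sum.nat_ivl_Suc' uu_def)
  also have "\<dots> \<le> 2 - 2/(2*real N + 1) + 1/(2*real N + 1)^2" using Suc.IH by linarith
  also have "\<dots> \<le> 2 - 2/(2*real (Suc N) + 1)"
  proof -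
    have "1/(2*real N + 1)^2 + 2/((2*real N + 1) + 2) \<le> 2/(2*real N + 1)"
      by (rule ineq1) simp
    moreover have eq: "2*real (Suc N) + 1 = (2*real N + 1) + 2" by simp
    ultimately show ?thesis unfolding eq by linarith
  qed
  finally show ?case .
qed

lemma sum_inv_uu2: "(\<Sum>n=1..N. 1/uu n) \<le> 2"
proof -
  have "0 \<le> 2/(2*real N + 1)" by simp
  then show ?thesis using sum_inv_uu[of N] by linarith
qed

lemma EE_le: "EE N \<le> exp 2"
proof -
  have "EE N \<le> (\<Prod>n=1..N. exp (1/uu n))"
    unfolding EE_def
  proof (rule prod_mono)
    fix n assume "n \<in> {1..N}"
    then have "uu n > 0" by (intro uu_pos) auto
    then show "0 \<le> 1 + 1/uu n \<and> 1 + 1/uu n \<le> exp (1/uu n)" by simp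
  qed
  also have "\<dots> = exp (\<Sum>n=1..N. 1/uu n)" by (simp add: exp_sum)
  also have "\<dots> \<le> exp 2" using sum_inv_uu2[of N] by simp
  finally show ?thesis .
qed

lemma T_bound: "T N r \<le> 2 * exp 2"
proof -
  have "T N r \<le> (\<Sum>n=1..N. exp 2 * (1/uu n))"
    unfolding T_def
  proof (rule sum_mono)
    fix n assume n: "n \<in> {1..N}"
    have u: "uu n > 0" using n by (intro uu_pos) auto
    have o: "2*real n - 1 \<ge> 1" using n by simp
    have "(2*real n - 1)^2 \<le> (2*real n - 1)^3" using o by (intro power_increasing) auto
    then have "1/(2*real n - 1)^3 \<le> 1/uu n" unfolding uu_def using o by (intro divide_left_mono) auto
    moreover have "0 \<le> e (n-1) r" "e (n-1) r \<le> exp 2" using e_bound[of "n-1" r] EE_le[of "n-1"] by auto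
    moreover have "0 \<le> 1/(2*real n - 1)^3" using o by simp
    ultimately have "e (n-1) r * (1/(2*real n - 1)^3) \<le> exp 2 * (1/uu n)"
      by (intro mult_mono) auto
    then show "e (n-1) r / (2*real n - 1)^3 \<le> exp 2 * (1/uu n)" by simp
  qed
  also have "\<dots> = exp 2 * (\<Sum>n=1..N. 1/uu n)" by (simp add: sum_distrib_left)
  also have "\<dots> \<le> exp 2 * 2"
    using sum_inv_uu2[of N] by (intro mult_left_mono) auto
  finally show ?thesis by simp
qed

lemma cover_Ls:
  assumes "finite X" "X \<subseteq> {ns. length ns = j \<and> sorted_wrt (<) ns \<and> (\<forall>n\<in>set ns. 1 \<le> n)}"
  shows "\<exists>N. X \<subseteq> Ls j N"
proof -
  define M where "M = Max (insert 0 (\<Union>ns\<in>X. set ns))"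
  have fin: "finite (insert 0 (\<Union>ns\<in>X. set ns))" using assms(1) by auto
  have "X \<subseteq> Ls j M"
  proof
    fix ns assume ns: "ns \<in> X"
    have "\<forall>n\<in>set ns. n \<le> M" unfolding M_def using ns fin by (auto intro: Max_ge)
    then show "ns \<in> Ls j M" using ns assms(2) unfolding Ls_def by auto
  qed
  then show ?thesis by blast
qed

lemma Ls_sub: "Ls j N \<subseteq> {ns. length ns = j \<and> sorted_wrt (<) ns \<and> (\<forall>n\<in>set ns. 1 \<le> n)}"
  unfolding Ls_def by auto
lemma Ls_mono: "Ls j N \<subseteq> Ls j (Suc N)"
  unfolding Ls_def by auto

lemma mtv_rep: "mtv (replicate j 2) = infsum wt {ns. length ns = j \<and> sorted_wrt (<) ns \<and> (\<forall>n\<in>set ns. 1 \<le> n)}"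
  unfolding mtv_def length_replicate by (rule infsum_cong) (simp add: wt_def)

lemma e_lim: "(\<lambda>N. e N j) \<longlonglongrightarrow> mtv (replicate j 2)"
proof -
  have "(\<lambda>N. sum wt (Ls j N)) \<longlonglongrightarrow> infsum wt {ns. length ns = j \<and> sorted_wrt (<) ns \<and> (\<forall>n\<in>set ns. 1 \<le> n)}"
    by (rule exhaust[OF _ Ls_sub finite_Ls Ls_mono cover_Ls, where C = "exp 2"])
       (auto simp: wt_nonneg sum_wt intro: order.trans[OF conjunct2[OF e_bound] EE_le])
  then show ?thesis unfolding sum_wt mtv_rep .
qed

lemma wt3_snoc: "wt3 (xs @ [x]) = wt xs / (2*real x - 1)^3" by (simp add: wt3_def)

lemma mtv_rep3: "mtv (replicate r 2 @ [3]) = infsum wt3 {ns. length ns = Suc r \<and> sorted_wrt (<) ns \<and> (\<forall>n\<in>set ns. 1 \<le> n)}"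
proof -
  have l3: "length (replicate r 2 @ [3::nat]) = Suc r" by simp
  show ?thesis unfolding mtv_def l3
proof (rule infsum_cong)
  fix ns :: "nat list" assume "ns \<in> {ns. length ns = Suc r \<and> sorted_wrt (<) ns \<and> (\<forall>n\<in>set ns. 1 \<le> n)}"
  then have l: "length ns = Suc r" by simp
  then have ne: "ns \<noteq> []" by auto
  define xs where "xs = butlast ns"
  define x where "x = last ns"
  have nsx: "ns = xs @ [x]" unfolding xs_def x_def using ne by simp
  have lx: "length xs = r" using l nsx by simp
  have "(\<Prod>i<length (replicate r 2 @ [3]). 1 / (2 * real (ns ! i) - 1) ^ ((replicate r 2 @ [3]) ! i))
      = (\<Prod>i<r. 1 / (2 * real (xs ! i) - 1) ^ 2) * (1 / (2*real x - 1)^3)"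
    unfolding nsx using lx by (simp add: prod.lessThan_Suc nth_append)
  also have "\<dots> = wt3 ns" unfolding nsx wt3_snoc wt_def lx by simp
  finally show "(\<Prod>i<Suc r. 1 / (2 * real (ns ! i) - 1) ^ ((replicate r 2 @ [3]) ! i)) = wt3 ns" using l3 by simp
qed
qed

lemma wt3_nonneg:
  assumes "ns \<in> {ns. length ns = Suc r \<and> sorted_wrt (<) ns \<and> (\<forall>n\<in>set ns. 1 \<le> n)}"
  shows "0 \<le> wt3 ns"
proof -
  have ne: "ns \<noteq> []" using assms by auto
  have "last ns \<ge> 1" using assms ne by auto
  moreover have "wt (butlast ns) \<ge> 0" using assms by (intro wt_nonneg) (auto dest: in_set_butlastD)
  ultimately show ?thesis unfolding wt3_def by simp
qed

lemma T_lim: "(\<lambda>N. T N r) \<longlonglongrightarrow> mtv (replicate r 2 @ [3])"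
proof -
  have "(\<lambda>N. sum wt3 (Ls (Suc r) N)) \<longlonglongrightarrow> infsum wt3 {ns. length ns = Suc r \<and> sorted_wrt (<) ns \<and> (\<forall>n\<in>set ns. 1 \<le> n)}"
    by (rule exhaust[OF wt3_nonneg Ls_sub finite_Ls Ls_mono cover_Ls, where C = "2 * exp 2"])
       (auto simp: sum_wt3 T_bound)
  then show ?thesis unfolding sum_wt3 mtv_rep3 .
qed

lemma ratio_lim: "((\<lambda>N. (2*real i + 1 + 2*real N)/(2*real i + 1 - 2*real N)) \<longlongrightarrow> -1) at_top"
  by real_asymp

lemma inv_lim: "((\<lambda>N. 1/(2*real i + 1 + 2*real N) - 1/(2*real i + 1 - 2*real N)) \<longlongrightarrow> 0) at_top"
  by real_asymp

lemma eps_lim: "(\<lambda>N. eps m N) \<longlonglongrightarrow> (-1)^m"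
proof -
  define P where "P N = (\<Prod>i<m. (2*real i + 1 + 2*real N)/(2*real i + 1 - 2*real N))" for N
  have PP: "P \<longlonglongrightarrow> (\<Prod>i<m. (-1::real))"
    unfolding P_def by (intro tendsto_prod ratio_lim)
  have e: "eps m N = 1 / P N" for N
  proof -
    have "Dp N (2*real m) = Dp N 0 * P N" unfolding P_def by (rule Dp_ratio)
    then show ?thesis unfolding eps_def using Dp_at0_ne0[of N] by simp
  qed
  have "(\<lambda>N. 1 / P N) \<longlonglongrightarrow> 1 / (\<Prod>i<m. (-1::real))"
    by (rule tendsto_divide[OF tendsto_const PP]) simp
  then show ?thesis unfolding e by (simp add: power_one_over[symmetric])
qed

lemma Sm_lim: "(\<lambda>N. Sm m N) \<longlonglongrightarrow> 0"
proof -
  have "(\<lambda>N. sp N (2*real m)) \<longlonglongrightarrow> (\<Sum>i<m. (0::real))"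
    unfolding sp_ratio by (intro tendsto_sum inv_lim)
  then have "(\<lambda>N. sp N (2*real m)) \<longlonglongrightarrow> 0" by simp
  then show ?thesis unfolding Sm_def by (rule tendsto_divide_zero)
qed

lemma rt_lim: "(\<lambda>N. rt m N k) \<longlonglongrightarrow> 8*real m * (-1)^m * (real (k+1) / cc m^(k+2))"
proof -
  have a: "(\<lambda>N. Sm m N / cc m^(k+1) + real (k+1) / cc m^(k+2)) \<longlonglongrightarrow> 0 + real (k+1) / cc m^(k+2)"
    by (intro tendsto_add tendsto_divide_zero Sm_lim tendsto_const)
  have b: "(\<lambda>N. 8*real m * eps m N) \<longlonglongrightarrow> 8*real m * (-1)^m"
    by (intro tendsto_mult tendsto_const eps_lim)
  have "(\<lambda>N. 8*real m * eps m N * (Sm m N / cc m^(k+1) + real (k+1) / cc m^(k+2)))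
     \<longlonglongrightarrow> 8*real m * (-1)^m * (0 + real (k+1) / cc m^(k+2))"
    by (rule tendsto_mult[OF b a])
  then show ?thesis unfolding rt_def by simp
qed

definition rlim :: "nat \<Rightarrow> real" where
  "rlim k = (\<Sum>i. 8*real (Suc i) * (-1)^(Suc i) * (real (k+1) / cc (Suc i)^(k+2)))"

lemma rho_lim_pos:
  assumes "k \<ge> 1"
  shows "(\<lambda>N. rho N k) \<longlonglongrightarrow> rlim k"
proof -
  have "eventually (\<lambda>N. summable (\<lambda>i. norm (rt (Suc i) N k))) sequentially \<and>
           summable (\<lambda>i. norm (8*real (Suc i) * (-1)^(Suc i) * (real (k+1) / cc (Suc i)^(k+2)))) \<and>
           ((\<lambda>N. suminf (\<lambda>i. rt (Suc i) N k)) \<longlongrightarrow> suminf (\<lambda>i. 8*real (Suc i) * (-1)^(Suc i) * (real (k+1) / cc (Suc i)^(k+2)))) sequentially"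
  proof (rule tannerys_theorem)
    show "\<And>i. (\<lambda>N. rt (Suc i) N k) \<longlonglongrightarrow> 8*real (Suc i) * (-1)^(Suc i) * (real (k+1) / cc (Suc i)^(k+2))"
      by (rule rt_lim)
    show "\<forall>\<^sub>F (i, N) in sequentially \<times>\<^sub>F sequentially. norm (rt (Suc i) N k) \<le> (real k + 2)/(real (Suc i))^2"
    proof (rule always_eventually, clarify)
      fix i N
      show "norm (rt (Suc i) N k) \<le> (real k + 2)/(real (Suc i))^2"
        using rt_bound_k[of "Suc i" k N] assms by simp
    qed
    show "summable (\<lambda>i. (real k + 2)/(real (Suc i))^2)" by (rule sum_inv_sq)
  qed simp
  then show ?thesis unfolding rho_def rlim_def by simp
qed

lemma zeta_sums: "s \<ge> 2 \<Longrightarrow> (\<lambda>n. 1/real (Suc n)^s) sums zeta_nat s"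
proof -
  assume s: "s \<ge> 2"
  have "summable (\<lambda>n. inverse (real n ^ s))" by (rule inverse_power_summable[OF s])
  then have "summable (\<lambda>n. inverse (real (Suc n) ^ s))" by (subst summable_Suc_iff)
  then have "summable (\<lambda>n. 1/real (Suc n)^s)" by (simp add: divide_inverse)
  then show ?thesis unfolding zeta_nat_def by (rule summable_sums)
qed

lemma zeta_split:
  assumes s: "s \<ge> 2"
  shows "(\<lambda>j. 1/(2*real j + 1)^s) sums ((1 - 1/2^s) * zeta_nat s)"
    and "(\<lambda>n. (-1)^n/real (Suc n)^s) sums ((1 - 2/2^s) * zeta_nat s)"
proof -
  define f where "f n = 1/real (Suc n)^s" for n
  define Z where "Z = zeta_nat s"
  have fZ: "f sums Z" unfolding f_def Z_def by (rule zeta_sums[OF s])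
  define h where "h n = (if odd n then f n else 0)" for n
  have h1: "h (2*j+1) = (1/2^s) * f j" for j
  proof -
    have e: "real (Suc (2*j+1)) = 2 * real (Suc j)" by simp
    have "h (2*j+1) = 1/(real (Suc (2*j+1)))^s" unfolding h_def f_def by simp
    also have "\<dots> = 1/(2*real (Suc j))^s" by (simp only: e)
    also have "\<dots> = (1/2^s) * f j" unfolding f_def power_mult_distrib by simp
    finally show ?thesis .
  qed
  have "(\<lambda>j. h (2*j+1)) sums ((1/2^s) * Z)" unfolding h1 by (rule sums_mult[OF fZ])
  moreover have "strict_mono (\<lambda>j::nat. 2*j+1)" by (rule strict_monoI) simp
  moreover have "h n = 0" if "n \<notin> range (\<lambda>j::nat. 2*j+1)" for n
  proof -
    have "\<not> odd n"
    proof
      assume "odd n"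
      then have "n = 2*(n div 2) + 1" by presburger
      then show False using that by blast
    qed
    then show ?thesis unfolding h_def by simp
  qed
  ultimately have hZ: "h sums ((1/2^s) * Z)" using sums_mono_reindex by metis
  define g where "g n = f n - h n" for n
  have gZ: "g sums (Z - (1/2^s) * Z)" unfolding g_def by (rule sums_diff[OF fZ hZ])
  have "(\<lambda>j. g (2*j)) sums (Z - (1/2^s) * Z)"
  proof (subst sums_mono_reindex)
    show "strict_mono (\<lambda>j::nat. 2*j)" by (rule strict_monoI) simp
    show "g n = 0" if "n \<notin> range (\<lambda>j::nat. 2*j)" for n
    proof -
      have "\<not> even n"
      proof
        assume "even n"
        then have "n = 2*(n div 2)" by presburger
        then show False using that by blast
      qed
      then show ?thesis unfolding g_def h_def by simp
    qed
  qed (rule gZ)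
  moreover have "g (2*j) = 1/(2*real j + 1)^s" for j
    unfolding g_def h_def f_def by (simp add: add.commute)
  ultimately show "(\<lambda>j. 1/(2*real j + 1)^s) sums ((1 - 1/2^s) * zeta_nat s)"
    unfolding Z_def by (simp add: algebra_simps)
  have "(\<lambda>n. f n - 2 * h n) sums (Z - 2 * ((1/2^s) * Z))"
    by (rule sums_diff[OF fZ sums_mult[OF hZ]])
  moreover have "f n - 2 * h n = (-1)^n/real (Suc n)^s" for n
    unfolding h_def f_def by simp
  ultimately show "(\<lambda>n. (-1)^n/real (Suc n)^s) sums ((1 - 2/2^s) * zeta_nat s)"
    unfolding Z_def by (simp add: algebra_simps)
qed

lemma pow_alg:
  fixes x K :: real
  assumes "x > 0"
  shows "8*x*(K/(4*x^2)^(k+2)) = 8*K/4^(k+2) * (1/x^(2*k+3))"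
proof -
  have a: "(4*x^2)^(k+2) = 4^(k+2) * (x^2)^(k+2)" by (rule power_mult_distrib)
  have b: "(x^2)^(k+2) = x^(2*(k+2))" by (rule power_mult[symmetric])
  have c: "2*(k+2) = Suc (2*k+3)" by simp
  have d: "(4*x^2)^(k+2) = 4^(k+2) * (x * x^(2*k+3))" unfolding a b c by (simp only: power_Suc)
  have "x^(2*k+3) > 0" using assms by simp
  then show ?thesis unfolding d using assms by (simp add: field_simps)
qed

lemma rho0_val: "rho 0 k = 8*real (k+1)/4^(k+2) * zeta_nat (2*k+3)"
proof -
  have t: "rt (Suc i) 0 k = 8*real (k+1)/4^(k+2) * (1/real (Suc i)^(2*k+3))" for i
  proof -
    have "rt (Suc i) 0 k = 8*real (Suc i)*(real (k+1)/(4*(real (Suc i))^2)^(k+2))"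
      unfolding rt_def eps_def Sm_def cc_def by (simp add: Dp_def)
    also have "\<dots> = 8*real (k+1)/4^(k+2) * (1/real (Suc i)^(2*k+3))" by (rule pow_alg) simp
    finally show ?thesis .
  qed
  have "(\<lambda>i. rt (Suc i) 0 k) sums (8*real (k+1)/4^(k+2) * zeta_nat (2*k+3))"
    unfolding t by (rule sums_mult[OF zeta_sums]) simp
  then show ?thesis unfolding rho_def by (rule sums_unique[symmetric])
qed

definition Lr :: "nat \<Rightarrow> real" where
  "Lr k = -(8*real (k+1)/4^(k+2)) * (1 - 1/4^(k+1)) * zeta_nat (2*k+3)"

lemma two_pow: "(2::real)^(2*k+3) = 2 * 4^(k+1)"
proof -
  have "(2::real)^(2*k+3) = 2^(2*k) * 8" by (simp only: power_add) simp
  also have "\<dots> = 4^k * 8" by (simp only: power_mult) simp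
  finally show ?thesis by simp
qed

lemma rlim_val: "rlim k = Lr k"
proof -
  have t: "8*real (Suc i) * (-1)^(Suc i) * (real (k+1) / cc (Suc i)^(k+2))
      = -(8*real (k+1)/4^(k+2)) * ((-1)^i/real (Suc i)^(2*k+3))" for i
  proof -
    have eq: "8*real (Suc i) * (real (k+1) / cc (Suc i)^(k+2)) = 8*real (k+1)/4^(k+2) * (1/real (Suc i)^(2*k+3))"
      unfolding cc_def by (rule pow_alg) simp
    have "8*real (Suc i) * (-1)^(Suc i) * (real (k+1) / cc (Suc i)^(k+2)) = (-1)^(Suc i) * (8*real (Suc i) * (real (k+1) / cc (Suc i)^(k+2)))"
      by (simp only: mult_ac)
    also have "\<dots> = (-1)^(Suc i) * (8*real (k+1)/4^(k+2) * (1/real (Suc i)^(2*k+3)))"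
      by (simp only: eq)
    also have "\<dots> = -(8*real (k+1)/4^(k+2)) * ((-1)^i/real (Suc i)^(2*k+3))"
    proof -
      have g: "\<And>X A B::real. (-1*X)*(A*(1/B)) = -A*(X/B)" by simp
      show ?thesis by (simp only: power_Suc g)
    qed
    finally show ?thesis .
  qed
  have "(\<lambda>i. 8*real (Suc i) * (-1)^(Suc i) * (real (k+1) / cc (Suc i)^(k+2)))
      sums (-(8*real (k+1)/4^(k+2)) * ((1 - 2/2^(2*k+3)) * zeta_nat (2*k+3)))"
    unfolding t by (rule sums_mult[OF zeta_split(2)]) simp
  then have "rlim k = -(8*real (k+1)/4^(k+2)) * ((1 - 2/2^(2*k+3)) * zeta_nat (2*k+3))"
    unfolding rlim_def by (rule sums_unique[symmetric])
  then show ?thesis unfolding Lr_def two_pow by simp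
qed

lemma T0_eq: "T N 0 = (\<Sum>j<N. 1/(2*real j + 1)^3)"
proof (induction N)
  case 0 then show ?case by simp
next
  case (Suc N)
  have eq: "2*real (Suc N) - 1 = 2*real N + 1" by simp
  have "T (Suc N) 0 = T N 0 + 1/(2*real (Suc N) - 1)^3" by (simp only: T_Suc e_0)
  also have "\<dots> = T N 0 + 1/(2*real N + 1)^3" by (simp only: eq)
  also have "\<dots> = (\<Sum>j<Suc N. 1/(2*real j + 1)^3)" using Suc by (simp only: sum.lessThan_Suc)
  finally show ?case .
qed

lemma rho_lim: "(\<lambda>N. rho N k) \<longlonglongrightarrow> Lr k"
proof (cases "k = 0")
  case False
  then show ?thesis using rho_lim_pos[of k] rlim_val by simp
next
  case True
  have s3: "(\<lambda>j. 1/(2*real j + 1)^3) sums ((1 - 1/2^3) * zeta_nat 3)" by (rule zeta_split(1)) simp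
  have Tl: "(\<lambda>N. T N 0) \<longlonglongrightarrow> (1 - 1/2^3) * zeta_nat 3"
    using s3 unfolding sums_def T0_eq .
  have r: "rho N 0 = rho 0 0 - T N 0" for N
    using fin_id[of 0 N] by (simp add: e_0)
  have "(\<lambda>N. rho 0 0 - T N 0) \<longlonglongrightarrow> rho 0 0 - (1 - 1/2^3) * zeta_nat 3"
    by (intro tendsto_diff tendsto_const Tl)
  moreover have "rho 0 0 - (1 - 1/2^3) * zeta_nat 3 = Lr 0"
    unfolding rho0_val Lr_def by simp
  moreover have "(\<lambda>N. rho N k) = (\<lambda>N. rho 0 0 - T N 0)"
    unfolding True by (rule ext) (rule r)
  ultimately show ?thesis using True by simp
qed

lemma main_id:
  "(-1)^r * mtv (replicate r 2 @ [3]) = rho 0 r - (\<Sum>j\<le>r. (-1)^j * mtv (replicate j 2) * Lr (r-j))"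
proof -
  have L1: "(\<lambda>N. (-1)^r * T N r) \<longlonglongrightarrow> (-1)^r * mtv (replicate r 2 @ [3])"
    by (intro tendsto_mult tendsto_const T_lim)
  have L2: "(\<lambda>N. rho 0 r - (\<Sum>j\<le>r. (-1)^j * e N j * rho N (r-j)))
      \<longlonglongrightarrow> rho 0 r - (\<Sum>j\<le>r. (-1)^j * mtv (replicate j 2) * Lr (r-j))"
    by (intro tendsto_diff tendsto_const tendsto_sum tendsto_mult e_lim rho_lim)
  show ?thesis using LIMSEQ_unique[OF L1 L2[folded fin_id]] .
qed

lemma t2_0: "mtv (replicate 0 2) = 1"
proof -
  have "(\<lambda>N. e N 0) \<longlonglongrightarrow> 1" by (simp add: e_0)
  then show ?thesis using LIMSEQ_unique[OF e_lim[of 0]] by simp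
qed

lemma pow4: "(2::real)^(2*k) = 4^k" by (simp add: power_mult)

theorem theorem3p3:
  fixes r :: nat
  shows "mtv (replicate r 2 @ [3]) =
    (\<Sum>k=1..r+1. (-1) ^ (k+1) * d_coeff r k * (1 / 2 ^ (2*k)) * zeta_nat (2*k+1)
        * mtv (replicate (r+1-k) 2))"
proof -
  define t2 where "t2 j = mtv (replicate j 2)" for j
  define B where "B k = (-1)^(k+1) * real ((2*k) choose (2*r+1)) * (1/4^k) * zeta_nat (2*k+1) * t2 (r+1-k)" for k
  define C where "C k = (-1)^(k+1) * ((1 - 1/4^k) * (2*real k)) * (1/4^k) * zeta_nat (2*k+1) * t2 (r+1-k)" for k
  have split: "(-1) ^ (k+1) * d_coeff r k * (1 / 2 ^ (2*k)) * zeta_nat (2*k+1) * mtv (replicate (r+1-k) 2) = B k + C k" for k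
    unfolding B_def C_def d_coeff_def t2_def pow4 by (simp add: algebra_simps)
  have Bsum: "(\<Sum>k=1..r+1. B k) = (-1)^r * rho 0 r"
  proof -
    have z: "B k = 0" if "k \<in> {1..r}" for k
    proof -
      have "2*k < 2*r+1" using that by simp
      then show ?thesis unfolding B_def by simp
    qed
    have "(\<Sum>k=1..r+1. B k) = (\<Sum>k=1..r. B k) + B (Suc r)"
      by simp
    also have "(\<Sum>k=1..r. B k) = 0" using z by simp
    also have "B (Suc r) = (-1)^r * rho 0 r"
    proof -
      have c: "(2 * Suc r) choose (2*r+1) = 2*r+2"
      proof -
        have "2 * Suc r = Suc (2*r+1)" by simp
        then show ?thesis by (simp only: binomial_Suc_n)
      qed
      have "B (Suc r) = (-1)^(r+2) * (2*real r + 2) * (1/4^(Suc r)) * zeta_nat (2*r+3)"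
      proof -
        have zz: "2 * Suc r + 1 = 2*r+3" by simp
        show ?thesis unfolding B_def c t2_def zz using t2_0 by (simp add: algebra_simps)
      qed
      also have "\<dots> = (-1)^r * (8*real (r+1)/4^(r+2) * zeta_nat (2*r+3))"
        by (simp add: field_simps)
      finally show ?thesis unfolding rho0_val .
    qed
    finally show ?thesis by simp
  qed
  have Csum: "(\<Sum>k=1..r+1. C k) = - ((-1)^r * (\<Sum>j\<le>r. (-1)^j * t2 j * Lr (r-j)))"
  proof -
    have "(\<Sum>k=1..r+1. C k) = (\<Sum>j\<le>r. C (r+1-j))"
      by (rule sum.reindex_bij_witness[of _ "\<lambda>k. r+1-k" "\<lambda>k. r+1-k"]) auto
    also have "\<dots> = (\<Sum>j\<le>r. - ((-1)^r * ((-1)^j * t2 j * Lr (r-j))))"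
    proof (rule sum.cong[OF refl])
      fix j assume "j \<in> {..r}"
      then obtain q where q: "r = q + j" by (metis add.commute atMost_iff le_add_diff_inverse)
      have k: "r + 1 - j = Suc q" using q by simp
      have rj: "r + 1 - Suc q = j" using q by simp
      have rmj: "r - j = q" using q by simp
      have s1: "(-1::real)^(Suc q + 1) = (-1)^q" by simp
      have jj: "(-1::real)^j * (-1)^j = 1"
      proof -
        have "(-1::real)^j * (-1)^j = ((-1)*(-1))^j" by (rule power_mult_distrib[symmetric])
        then show ?thesis by simp
      qed
      have s2: "(-1::real)^r * (-1)^j = (-1)^q"
      proof -
        have "(-1::real)^r * (-1)^j = (-1)^q * ((-1)^j * (-1)^j)" unfolding q power_add by (simp only: mult.assoc)
        then show ?thesis using jj by simp
      qed
      have z: "2 * Suc q + 1 = 2*q+3" by simp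
      have "C (r+1-j) = (-1)^q * ((1 - 1/4^(Suc q)) * (2*real (Suc q))) * (1/4^(Suc q)) * zeta_nat (2*q+3) * t2 j"
        unfolding C_def k rj s1 z ..
      also have "\<dots> = (-1)^q * t2 j * ((8*real (q+1)/4^(q+2)) * (1 - 1/4^(q+1)) * zeta_nat (2*q+3))"
        by (simp add: field_simps)
      also have "\<dots> = - ((-1)^q * t2 j * Lr q)"
        unfolding Lr_def by simp
      also have "\<dots> = - ((-1)^r * ((-1)^j * t2 j * Lr (r-j)))"
        unfolding rmj s2[symmetric] by (simp only: mult.assoc)
      finally show "C (r+1-j) = - ((-1)^r * ((-1)^j * t2 j * Lr (r-j)))" .
    qed
    also have "\<dots> = - ((-1)^r * (\<Sum>j\<le>r. (-1)^j * t2 j * Lr (r-j)))"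
      by (simp add: sum_negf sum_distrib_left)
    finally show ?thesis .
  qed
  have main: "mtv (replicate r 2 @ [3]) = (-1)^r * rho 0 r - (-1)^r * (\<Sum>j\<le>r. (-1)^j * t2 j * Lr (r-j))"
  proof -
    have "(-1)^r * ((-1)^r * mtv (replicate r 2 @ [3])) = (-1)^r * (rho 0 r - (\<Sum>j\<le>r. (-1)^j * t2 j * Lr (r-j)))"
      using main_id[of r] unfolding t2_def by simp
    moreover have "(-1::real)^r * (-1)^r = 1"
    proof -
      have "(-1::real)^r * (-1)^r = ((-1)*(-1))^r" by (rule power_mult_distrib[symmetric])
      then show ?thesis by simp
    qed
    ultimately have "mtv (replicate r 2 @ [3]) = (-1)^r * (rho 0 r - (\<Sum>j\<le>r. (-1)^j * t2 j * Lr (r-j)))"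
      by (metis mult.assoc mult_1)
    then show ?thesis by (simp only: right_diff_distrib)
  qed
  have "(\<Sum>k=1..r+1. (-1) ^ (k+1) * d_coeff r k * (1 / 2 ^ (2*k)) * zeta_nat (2*k+1) * mtv (replicate (r+1-k) 2))
      = (\<Sum>k=1..r+1. B k) + (\<Sum>k=1..r+1. C k)"
    unfolding split by (rule sum.distrib)
  also have "\<dots> = mtv (replicate r 2 @ [3])" unfolding Bsum Csum main by simp
  finally show ?thesis by simp
qed

end
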